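(* Let $\Gamma$ be a group and $S$ a $\Gamma$-graded inverse semigroup equipped with a non-degenerate partial action on a nonempty set $X$. If $S$ is strongly graded, then the groupoid of germs $S\ltimes X$ is strongly graded in the induced $\Gamma$-grading.
   Context: Semigroups have a zero; $S$ is $\Gamma$-graded via $\deg:S\setminus\{0\}\to\Gamma$ with $\deg(st)=\deg(s)\deg(t)$ whenever $st\neq0$; $S_\alpha=\deg^{-1}(\alpha)\cup\{0\}$; strongly graded: $S_\alpha S_\beta=S_{\alpha\beta}$. A partial action of $S$ on $X$ is a zero-preserving homomorphism $s\mapsto\theta_s$ from $S$ into the symmetric inverse monoid $\mathcal I(X)$ (partial bijections of $X$, zero the empty map); $X_s=\mathrm{Dom}(\theta_s)$; it is non-degenerate if $X=\bigcup_{e\in E(S)}X_e$. On $\{(s,x):s\in S,x\in X_s\}$ let $(s,x)\sim(t,y)$ iff $x=y$ and there is an idempotent $e$ with $x\in X_e$ and $se=te$; the class $[s,x]$ is the germ. $S\ltimes X$ is the set of germs, a groupoid with $\mathbf d([s,x])=x$, $\mathbf r([s,x])=\theta_s(x)$, $[s,x][t,y]=[st,y]$ when $x=\theta_t(y)$, $[s,x]^{-1}=[s^{-1},\theta_s(x)]$, unit space identified with $X$. Its induced grading is $[s,x]\mapsto\deg(s)$, with $(S\ltimes X)_\alpha$ the germs of degree $\alpha$. A graded groupoid $\mathscr G$ is strongly graded if $\mathscr G_\alpha\mathscr G_\beta=\mathscr G_{\alpha\beta}$ for all $\alpha,\beta$, where $AB=\{ab:a\in A,b\in B,\mathbf d(a)=\mathbf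 r(b)\}$. *)

theory Defs
  imports Main
begin

definition inverse_semigroup0 :: "'s set \<Rightarrow> ('s \<Rightarrow> 's \<Rightarrow> 's) \<Rightarrow> 's \<Rightarrow> bool" where
  "inverse_semigroup0 S mult z \<longleftrightarrow>
     z \<in> S \<and>
     (\<forall>s\<in>S. \<forall>t\<in>S. mult s t \<in> S) \<and>
     (\<forall>s\<in>S. \<forall>t\<in>S. \<forall>u\<in>S. mult (mult s t) u = mult s (mult t u)) \<and>
     (\<forall>s\<in>S. mult z s = z \<and> mult s z = z) \<and>
     (\<forall>s\<in>S. \<exists>!t. t \<in> S \<and> mult (mult s t) s = s \<and> mult (mult t s) t = t)"

definition idems :: "'s set \<Rightarrow> ('s \<Rightarrow> 's \<Rightarrow> 's) \<Rightarrow> 's set" where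
  "idems S mult = {e \<in> S. mult e e = e}"

definition graded :: "'s set \<Rightarrow> ('s \<Rightarrow> 's \<Rightarrow> 's) \<Rightarrow> 's \<Rightarrow> ('s \<Rightarrow> 'g::group_add) \<Rightarrow> bool" where
  "graded S mult z deg \<longleftrightarrow>
     (\<forall>s\<in>S - {z}. \<forall>t\<in>S - {z}. mult s t \<noteq> z \<longrightarrow> deg (mult s t) = deg s + deg t)"

definition homog :: "'s set \<Rightarrow> 's \<Rightarrow> ('s \<Rightarrow> 'g::group_add) \<Rightarrow> 'g \<Rightarrow> 's set" where
  "homog S z deg \<alpha> = {s \<in> S - {z}. deg s = \<alpha>} \<union> {z}"

definition set_mult :: "('s \<Rightarrow> 's \<Rightarrow> 's) \<Rightarrow> 's set \<Rightarrow> 's set \<Rightarrow> 's set" where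
  "set_mult mult A B = {mult a b | a b. a \<in> A \<and> b \<in> B}"

definition strongly_graded_sg :: "'s set \<Rightarrow> ('s \<Rightarrow> 's \<Rightarrow> 's) \<Rightarrow> 's \<Rightarrow> ('s \<Rightarrow> 'g::group_add) \<Rightarrow> bool" where
  "strongly_graded_sg S mult z deg \<longleftrightarrow>
     (\<forall>\<alpha> \<beta>. set_mult mult (homog S z deg \<alpha>) (homog S z deg \<beta>) = homog S z deg (\<alpha> + \<beta>))"

definition partial_bij :: "'x set \<Rightarrow> ('x \<rightharpoonup> 'x) \<Rightarrow> bool" where
  "partial_bij X f \<longleftrightarrow> dom f \<subseteq> X \<and> ran f \<subseteq> X \<and> inj_on f (dom f)"

definition partial_action ::
  "'s set \<Rightarrow> ('s \<Rightarrow> 's \<Rightarrow> 's) \<Rightarrow> 's \<Rightarrow> 'x set \<Rightarrow> ('s \<Rightarrow> 'x \<rightharpoonup> 'x) \<Rightarrow> bool" where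
  "partial_action S mult z X \<theta> \<longleftrightarrow>
     (\<forall>s\<in>S. partial_bij X (\<theta> s)) \<and>
     (\<forall>s\<in>S. \<forall>t\<in>S. \<theta> (mult s t) = \<theta> s \<circ>\<^sub>m \<theta> t) \<and>
     \<theta> z = Map.empty"

definition non_degenerate ::
  "'s set \<Rightarrow> ('s \<Rightarrow> 's \<Rightarrow> 's) \<Rightarrow> 'x set \<Rightarrow> ('s \<Rightarrow> 'x \<rightharpoonup> 'x) \<Rightarrow> bool" where
  "non_degenerate S mult X \<theta> \<longleftrightarrow> X = (\<Union>e\<in>idems S mult. dom (\<theta> e))"

definition germ_pairs :: "'s set \<Rightarrow> ('s \<Rightarrow> 'x \<rightharpoonup> 'x) \<Rightarrow> ('s \<times> 'x) set" where
  "germ_pairs S \<theta> = {(s, x). s \<in> S \<and> x \<in> dom (\<theta> s)}"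

definition germ_equiv ::
  "'s set \<Rightarrow> ('s \<Rightarrow> 's \<Rightarrow> 's) \<Rightarrow> ('s \<Rightarrow> 'x \<rightharpoonup> 'x) \<Rightarrow> 's \<times> 'x \<Rightarrow> 's \<times> 'x \<Rightarrow> bool" where
  "germ_equiv S mult \<theta> p q \<longleftrightarrow>
     snd p = snd q \<and> (\<exists>e\<in>idems S mult. snd p \<in> dom (\<theta> e) \<and> mult (fst p) e = mult (fst q) e)"

definition germ ::
  "'s set \<Rightarrow> ('s \<Rightarrow> 's \<Rightarrow> 's) \<Rightarrow> ('s \<Rightarrow> 'x \<rightharpoonup> 'x) \<Rightarrow> 's \<Rightarrow> 'x \<Rightarrow> ('s \<times> 'x) set" where
  "germ S mult \<theta> s x = {q \<in> germ_pairs S \<theta>. germ_equiv S mult \<theta> (s, x) q}"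

definition germs ::
  "'s set \<Rightarrow> ('s \<Rightarrow> 's \<Rightarrow> 's) \<Rightarrow> ('s \<Rightarrow> 'x \<rightharpoonup> 'x) \<Rightarrow> ('s \<times> 'x) set set" where
  "germs S mult \<theta> = {germ S mult \<theta> s x | s x. (s, x) \<in> germ_pairs S \<theta>}"

text \<open>Structure maps, defined via a chosen representative (well-defined on germs).\<close>

definition germ_rep :: "('s \<times> 'x) set \<Rightarrow> 's \<times> 'x" where
  "germ_rep g = (SOME p. p \<in> g)"

definition germ_d :: "('s \<times> 'x) set \<Rightarrow> 'x" where
  "germ_d g = snd (germ_rep g)"

definition germ_r :: "('s \<Rightarrow> 'x \<rightharpoonup> 'x) \<Rightarrow> ('s \<times> 'x) set \<Rightarrow> 'x" where
  "germ_r \<theta> g = the (\<theta> (fst (germ_rep g)) (snd (germ_rep g)))"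

definition germ_comp ::
  "'s set \<Rightarrow> ('s \<Rightarrow> 's \<Rightarrow> 's) \<Rightarrow> ('s \<Rightarrow> 'x \<rightharpoonup> 'x) \<Rightarrow> ('s \<times> 'x) set \<Rightarrow> ('s \<times> 'x) set \<Rightarrow> ('s \<times> 'x) set" where
  "germ_comp S mult \<theta> a b = germ S mult \<theta> (mult (fst (germ_rep a)) (fst (germ_rep b))) (snd (germ_rep b))"

definition germ_deg :: "('s \<Rightarrow> 'g) \<Rightarrow> ('s \<times> 'x) set \<Rightarrow> 'g" where
  "germ_deg deg g = deg (fst (germ_rep g))"

definition germ_homog ::
  "'s set \<Rightarrow> ('s \<Rightarrow> 's \<Rightarrow> 's) \<Rightarrow> ('s \<Rightarrow> 'x \<rightharpoonup> 'x) \<Rightarrow> ('s \<Rightarrow> 'g) \<Rightarrow> 'g \<Rightarrow> ('s \<times> 'x) set set" where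
  "germ_homog S mult \<theta> deg \<alpha> = {g \<in> germs S mult \<theta>. germ_deg deg g = \<alpha>}"

definition germ_set_mult ::
  "'s set \<Rightarrow> ('s \<Rightarrow> 's \<Rightarrow> 's) \<Rightarrow> ('s \<Rightarrow> 'x \<rightharpoonup> 'x) \<Rightarrow> ('s \<times> 'x) set set \<Rightarrow> ('s \<times> 'x) set set \<Rightarrow> ('s \<times> 'x) set set" where
  "germ_set_mult S mult \<theta> A B =
     {germ_comp S mult \<theta> a b | a b. a \<in> A \<and> b \<in> B \<and> germ_d a = germ_r \<theta> b}"

definition germ_strongly_graded ::
  "'s set \<Rightarrow> ('s \<Rightarrow> 's \<Rightarrow> 's) \<Rightarrow> ('s \<Rightarrow> 'x \<rightharpoonup> 'x) \<Rightarrow> ('s \<Rightarrow> 'g::group_add) \<Rightarrow> bool" where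
  "germ_strongly_graded S mult \<theta> deg \<longleftrightarrow>
     (\<forall>\<alpha> \<beta>. germ_set_mult S mult \<theta> (germ_homog S mult \<theta> deg \<alpha>) (germ_homog S mult \<theta> deg \<beta>)
             = germ_homog S mult \<theta> deg (\<alpha> + \<beta>))"

end

theory Submission
  imports Defs
begin

locale L =
  fixes S :: "'s set" and mult :: "'s \<Rightarrow> 's \<Rightarrow> 's" (infixl "\<cdot>" 70) and z :: 's
    and deg :: "'s \<Rightarrow> 'g::group_add"
    and X :: "'x set" and \<theta> :: "'s \<Rightarrow> 'x \<rightharpoonup> 'x"
  assumes isg: "inverse_semigroup0 S mult z"
    and gr: "graded S mult z deg"
    and pa: "partial_action S mult z X \<theta>"
    and nd: "non_degenerate S mult X \<theta>"
    and sg: "strongly_graded_sg S mult z deg"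
begin

abbreviation "E \<equiv> idems S mult"

lemma closed[simp]: "s \<in> S \<Longrightarrow> t \<in> S \<Longrightarrow> s \<cdot> t \<in> S"
  using isg unfolding inverse_semigroup0_def by blast

lemma assoc[simp]: "a \<in> S \<Longrightarrow> b \<in> S \<Longrightarrow> c \<in> S \<Longrightarrow> (a \<cdot> b) \<cdot> c = a \<cdot> (b \<cdot> c)"
  using isg unfolding inverse_semigroup0_def by blast

lemma zero: "z \<in> S" "s \<in> S \<Longrightarrow> z \<cdot> s = z" "s \<in> S \<Longrightarrow> s \<cdot> z = z"
  using isg unfolding inverse_semigroup0_def by blast+

definition iv :: "'s \<Rightarrow> 's" where
  "iv s = (THE t. t \<in> S \<and> s \<cdot> t \<cdot> s = s \<and> t \<cdot> s \<cdot> t = t)"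

lemma iv_props: assumes "s \<in> S"
  shows "iv s \<in> S" "s \<cdot> iv s \<cdot> s = s" "iv s \<cdot> s \<cdot> iv s = iv s"
proof -
  have "\<exists>!t. t \<in> S \<and> s \<cdot> t \<cdot> s = s \<and> t \<cdot> s \<cdot> t = t"
    using isg assms unfolding inverse_semigroup0_def by blast
  then have "iv s \<in> S \<and> s \<cdot> iv s \<cdot> s = s \<and> iv s \<cdot> s \<cdot> iv s = iv s"
    unfolding iv_def by (rule theI')
  then show "iv s \<in> S" "s \<cdot> iv s \<cdot> s = s" "iv s \<cdot> s \<cdot> iv s = iv s" by auto
qed

lemma iv_unique: assumes "s \<in> S" "t \<in> S" "s \<cdot> t \<cdot> s = s" "t \<cdot> s \<cdot> t = t"
  shows "t = iv s"
proof -
  have "\<exists>!t. t \<in> S \<and> s \<cdot> t \<cdot> s = s \<and> t \<cdot> s \<cdot> t = t"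
    using isg assms unfolding inverse_semigroup0_def by blast
  then show ?thesis using iv_props[OF assms(1)] assms by blast
qed

lemma idemD: "e \<in> E \<Longrightarrow> e \<in> S" "e \<in> E \<Longrightarrow> e \<cdot> e = e"
  unfolding idems_def by auto

lemma idem_left: "e \<in> E \<Longrightarrow> u \<in> S \<Longrightarrow> e \<cdot> (e \<cdot> u) = e \<cdot> u"
  by (metis assoc idemD)

lemma prod_idem: assumes e: "e \<in> E" and f: "f \<in> E" shows "e \<cdot> f \<in> E"
proof -
  have eS: "e \<in> S" and fS: "f \<in> S" and ee: "e \<cdot> e = e" and ff: "f \<cdot> f = f"
    using e f idemD by auto
  define x where "x = iv (e \<cdot> f)"
  have xS: "x \<in> S" using iv_props eS fS x_def by simp
  have h1: "e \<cdot> (f \<cdot> (x \<cdot> (e \<cdot> f))) = e \<cdot> f"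
    using iv_props(2)[of "e \<cdot> f"] eS fS xS x_def by simp
  have h2: "x \<cdot> (e \<cdot> (f \<cdot> x)) = x"
    using iv_props(3)[of "e \<cdot> f"] eS fS xS x_def by simp
  define y where "y = f \<cdot> x \<cdot> e"
  have yS: "y \<in> S" using y_def eS fS xS by simp
  have "(e \<cdot> f) \<cdot> y \<cdot> (e \<cdot> f) = e \<cdot> (f \<cdot> (f \<cdot> (x \<cdot> (e \<cdot> (e \<cdot> f)))))"
    using y_def eS fS xS by simp
  also have "\<dots> = e \<cdot> f" using idem_left e f eS fS xS h1 by simp
  finally have y1: "(e \<cdot> f) \<cdot> y \<cdot> (e \<cdot> f) = e \<cdot> f" .
  have h2': "x \<cdot> (e \<cdot> (f \<cdot> (x \<cdot> e))) = x \<cdot> e"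
    by (metis h2 assoc eS fS xS closed)
  have "y \<cdot> (e \<cdot> f) \<cdot> y = f \<cdot> (x \<cdot> (e \<cdot> (e \<cdot> (f \<cdot> (f \<cdot> (x \<cdot> e))))))"
    using y_def eS fS xS by simp
  also have "\<dots> = f \<cdot> (x \<cdot> (e \<cdot> (f \<cdot> (x \<cdot> e))))" using idem_left e f eS fS xS by simp
  also have "\<dots> = y" using h2' y_def eS fS xS by simp
  finally have y2: "y \<cdot> (e \<cdot> f) \<cdot> y = y" .
  have yx: "y = x" using iv_unique[of "e \<cdot> f" y] y1 y2 yS eS fS x_def by simp
  have "y \<cdot> y = f \<cdot> (x \<cdot> (e \<cdot> (f \<cdot> (x \<cdot> e))))" using y_def eS fS xS by simp
  also have "\<dots> = y" using h2' y_def eS fS xS by simp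
  finally have xx: "x \<cdot> x = x" using yx by simp
  have "x = iv x" using iv_unique[of x x] xx xS by simp
  moreover have "e \<cdot> f = iv x"
    using iv_unique[of x "e \<cdot> f"] xS eS fS h1 h2 x_def
    by (metis assoc closed iv_props(2,3))
  ultimately have "e \<cdot> f = x" by simp
  then show ?thesis using xx eS fS unfolding idems_def by auto
qed

lemma idem_comm: assumes e: "e \<in> E" and f: "f \<in> E" shows "e \<cdot> f = f \<cdot> e"
proof -
  have eS: "e \<in> S" and fS: "f \<in> S" and ee: "e \<cdot> e = e" and ff: "f \<cdot> f = f"
    using e f idemD by auto
  have ef: "e \<cdot> f \<in> E" "f \<cdot> e \<in> E" using prod_idem e f by auto
  have a: "e \<cdot> (f \<cdot> (e \<cdot> f)) = e \<cdot> f" using idemD(2)[OF ef(1)] eS fS by simp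
  have b: "f \<cdot> (e \<cdot> (f \<cdot> e)) = f \<cdot> e" using idemD(2)[OF ef(2)] eS fS by simp
  have "(e \<cdot> f) \<cdot> (f \<cdot> e) \<cdot> (e \<cdot> f) = e \<cdot> (f \<cdot> (f \<cdot> (e \<cdot> (e \<cdot> f))))" using eS fS by simp
  also have "\<dots> = e \<cdot> f" using idem_left e f eS fS a by simp
  finally have 1: "(e \<cdot> f) \<cdot> (f \<cdot> e) \<cdot> (e \<cdot> f) = e \<cdot> f" .
  have "(f \<cdot> e) \<cdot> (e \<cdot> f) \<cdot> (f \<cdot> e) = f \<cdot> (e \<cdot> (e \<cdot> (f \<cdot> (f \<cdot> e))))" using eS fS by simp
  also have "\<dots> = f \<cdot> e" using idem_left e f eS fS b by simp
  finally have 2: "(f \<cdot> e) \<cdot> (e \<cdot> f) \<cdot> (f \<cdot> e) = f \<cdot> e" .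
  have "f \<cdot> e = iv (e \<cdot> f)" using iv_unique 1 2 eS fS by simp
  moreover have "e \<cdot> f = iv (e \<cdot> f)"
    using iv_unique[of "e \<cdot> f" "e \<cdot> f"] idemD(2)[OF ef(1)] eS fS by simp
  ultimately show ?thesis by simp
qed

lemma pbij: "s \<in> S \<Longrightarrow> partial_bij X (\<theta> s)"
  using pa unfolding partial_action_def by blast

lemma th_mult: "s \<in> S \<Longrightarrow> t \<in> S \<Longrightarrow> \<theta> (s \<cdot> t) = \<theta> s \<circ>\<^sub>m \<theta> t"
  using pa unfolding partial_action_def by blast

lemma th_z: "\<theta> z = Map.empty"
  using pa unfolding partial_action_def by blast

lemma th_mult_app: "s \<in> S \<Longrightarrow> t \<in> S \<Longrightarrow> \<theta> (s \<cdot> t) x = (case \<theta> t x of None \<Rightarrow> None | Some y \<Rightarrow> \<theta> s y)"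
  using th_mult by (simp add: map_comp_def)

lemma inj_th: "s \<in> S \<Longrightarrow> \<theta> s x = Some y \<Longrightarrow> \<theta> s x' = Some y \<Longrightarrow> x = x'"
  using pbij unfolding partial_bij_def inj_on_def by (metis domI)

lemma idem_fix: assumes e: "e \<in> E" and h: "\<theta> e x = Some y" shows "y = x"
proof -
  have eS: "e \<in> S" using idemD e by auto
  have "\<theta> (e \<cdot> e) x = \<theta> e y" using th_mult_app[OF eS eS, of x] h by simp
  then have "\<theta> e y = Some y" using h idemD[OF e] by simp
  then show ?thesis using inj_th h idemD[OF e] by metis
qed

lemma idem_fix': "e \<in> E \<Longrightarrow> x \<in> dom (\<theta> e) \<Longrightarrow> \<theta> e x = Some x"
  using idem_fix by blast

lemma th_idem_right: "s \<in> S \<Longrightarrow> e \<in> E \<Longrightarrow> x \<in> dom (\<theta> e) \<Longrightarrow> \<theta> (s \<cdot> e) x = \<theta> s x"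
  using th_mult_app idem_fix' idemD by simp

lemma iv_back: assumes w: "w \<in> S" and h: "\<theta> w x = Some y" shows "\<theta> (iv w) y = Some x"
proof -
  have "\<theta> w x = \<theta> (w \<cdot> iv w \<cdot> w) x" using iv_props w by simp
  also have "\<dots> = \<theta> (w \<cdot> iv w) y"
    using th_mult_app[of "w \<cdot> iv w" w x] iv_props w h by (simp del: assoc)
  also have "\<dots> = (case \<theta> (iv w) y of None \<Rightarrow> None | Some v \<Rightarrow> \<theta> w v)"
    using th_mult_app[of w "iv w" y] iv_props w by (simp del: assoc)
  finally obtain v where v: "\<theta> (iv w) y = Some v" "\<theta> w v = Some y" using h
    by (cases "\<theta> (iv w) y") auto
  then show ?thesis using inj_th w h by metis
qed

lemma nz: "s \<in> S \<Longrightarrow> x \<in> dom (\<theta> s) \<Longrightarrow> s \<noteq> z"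
  using th_z by auto

lemma deg_idem: assumes e: "e \<in> E" "e \<noteq> z" shows "deg e = 0"
proof -
  have eS: "e \<in> S - {z}" using e idemD by auto
  have "e \<cdot> e \<noteq> z \<longrightarrow> deg (e \<cdot> e) = deg e + deg e" using gr eS unfolding graded_def by blast
  then have "deg (e \<cdot> e) = deg e + deg e" using idemD e by simp
  then have "deg e + deg e = deg e + 0" using idemD e by simp
  then show ?thesis by (rule add_left_imp_eq)
qed

lemma deg_mult: "s \<in> S \<Longrightarrow> t \<in> S \<Longrightarrow> s \<noteq> z \<Longrightarrow> t \<noteq> z \<Longrightarrow> s \<cdot> t \<noteq> z \<Longrightarrow> deg (s \<cdot> t) = deg s + deg t"
  using gr unfolding graded_def by blast

lemma pair_X: "(s, x) \<in> germ_pairs S \<theta> \<Longrightarrow> \<exists>e\<in>E. x \<in> dom (\<theta> e)"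
proof -
  assume "(s, x) \<in> germ_pairs S \<theta>"
  then have "x \<in> X" using pbij unfolding germ_pairs_def partial_bij_def by auto
  then show ?thesis using nd unfolding non_degenerate_def by auto
qed

lemma germ_mem: "q \<in> germ S mult \<theta> s x \<longleftrightarrow> q \<in> germ_pairs S \<theta> \<and> snd q = x \<and>
   (\<exists>e\<in>E. x \<in> dom (\<theta> e) \<and> s \<cdot> e = fst q \<cdot> e)"
  unfolding germ_def germ_equiv_def by auto

lemma germ_self: "(s, x) \<in> germ_pairs S \<theta> \<Longrightarrow> (s, x) \<in> germ S mult \<theta> s x"
  using germ_mem pair_X by auto

lemma rep_in: assumes "g \<in> germs S mult \<theta>" shows "germ_rep g \<in> g"
proof -
  obtain s x where "(s, x) \<in> germ_pairs S \<theta>" "g = germ S mult \<theta> s x"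
    using assms unfolding germs_def by blast
  then have "(s, x) \<in> g" using germ_self by simp
  then show ?thesis unfolding germ_rep_def by (rule someI)
qed

lemma germs_sub: "g \<in> germs S mult \<theta> \<Longrightarrow> g \<subseteq> germ_pairs S \<theta>"
  unfolding germs_def germ_def by auto

lemma germ_in: "(s, x) \<in> germ_pairs S \<theta> \<Longrightarrow> germ S mult \<theta> s x \<in> germs S mult \<theta>"
  unfolding germs_def by blast

lemma pairD: "(s, x) \<in> germ_pairs S \<theta> \<longleftrightarrow> s \<in> S \<and> x \<in> dom (\<theta> s)"
  unfolding germ_pairs_def by auto

lemma germ_eq: assumes p: "(s, x) \<in> germ_pairs S \<theta>" "(t, x) \<in> germ_pairs S \<theta>"
  and k: "k \<in> E" "x \<in> dom (\<theta> k)" "s \<cdot> k = t \<cdot> k"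
  shows "germ S mult \<theta> s x = germ S mult \<theta> t x"
proof -
  have sym: "germ S mult \<theta> s x \<subseteq> germ S mult \<theta> t x"
    if p: "(s, x) \<in> germ_pairs S \<theta>" "(t, x) \<in> germ_pairs S \<theta>"
    and k: "k \<in> E" "x \<in> dom (\<theta> k)" "s \<cdot> k = t \<cdot> k" for s t
  proof
    fix q assume "q \<in> germ S mult \<theta> s x"
    then obtain e where q: "q \<in> germ_pairs S \<theta>" "snd q = x" "e \<in> E" "x \<in> dom (\<theta> e)"
      "s \<cdot> e = fst q \<cdot> e" using germ_mem by blast
    have qS: "fst q \<in> S" using q(1) unfolding germ_pairs_def by auto
    have sS: "s \<in> S" "t \<in> S" using p pairD by auto
    have kS: "k \<in> S" "e \<in> S" using k q idemD by auto
    have "t \<cdot> (k \<cdot> e) = s \<cdot> (k \<cdot> e)" using k(3) sS kS by (metis assoc)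
    also have "\<dots> = s \<cdot> (e \<cdot> k)" using idem_comm k q by simp
    also have "\<dots> = fst q \<cdot> (e \<cdot> k)" using q(5) sS kS qS by (metis assoc)
    also have "\<dots> = fst q \<cdot> (k \<cdot> e)" using idem_comm k q by simp
    finally have "t \<cdot> (k \<cdot> e) = fst q \<cdot> (k \<cdot> e)" .
    moreover have "k \<cdot> e \<in> E" using prod_idem k q by simp
    moreover have "x \<in> dom (\<theta> (k \<cdot> e))" using th_idem_right k q kS idemD by (simp add: domIff)
    ultimately show "q \<in> germ S mult \<theta> t x" using germ_mem q by blast
  qed
  show ?thesis using sym[OF p k] sym[OF p(2,1) k(1,2) k(3)[symmetric]] by blast
qed

lemma deg_wd: assumes p: "(s, x) \<in> germ_pairs S \<theta>" and q: "q \<in> germ S mult \<theta> s x"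
  shows "deg (fst q) = deg s"
proof -
  obtain e where e: "q \<in> germ_pairs S \<theta>" "snd q = x" "e \<in> E" "x \<in> dom (\<theta> e)"
      "s \<cdot> e = fst q \<cdot> e" using germ_mem q by blast
  obtain t where t: "q = (t, x)" using e by (cases q) auto
  have tS: "t \<in> S" "x \<in> dom (\<theta> t)" using e(1) t pairD by auto
  have sS: "s \<in> S" "x \<in> dom (\<theta> s)" using p pairD by auto
  have eS: "e \<in> S" using e idemD by auto
  have ez: "e \<noteq> z" using nz eS e(4) by blast
  have d0: "deg e = 0" using deg_idem e(3) ez by simp
  have "x \<in> dom (\<theta> (s \<cdot> e))" using th_idem_right[of s e x] sS e(3,4) by (simp add: domIff)
  then have sez: "s \<cdot> e \<noteq> z" using nz sS eS by (metis closed)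
  have tez: "t \<cdot> e \<noteq> z" using sez e(5) t by simp
  have "deg s = deg (s \<cdot> e)" using deg_mult[of s e] sS eS ez sez nz d0 by simp
  also have "\<dots> = deg (t \<cdot> e)" using e(5) t by simp
  also have "\<dots> = deg t" using deg_mult[of t e] tS eS ez tez nz d0 by simp
  finally show ?thesis using t by simp
qed

lemma germ_deg_eq: "(s, x) \<in> germ_pairs S \<theta> \<Longrightarrow> germ_deg deg (germ S mult \<theta> s x) = deg s"
  unfolding germ_deg_def using deg_wd rep_in germ_in by blast

lemma germ_d_eq: "(s, x) \<in> germ_pairs S \<theta> \<Longrightarrow> germ_d (germ S mult \<theta> s x) = x"
  unfolding germ_d_def using rep_in germ_in germ_mem by blast

lemma rep_th: assumes p: "(s, x) \<in> germ_pairs S \<theta>"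
  shows "\<theta> (fst (germ_rep (germ S mult \<theta> s x))) x = \<theta> s x"
proof -
  have "germ_rep (germ S mult \<theta> s x) \<in> germ S mult \<theta> s x" using rep_in germ_in p by blast
  then obtain e where e: "germ_rep (germ S mult \<theta> s x) \<in> germ_pairs S \<theta>" "e \<in> E" "x \<in> dom (\<theta> e)"
      "s \<cdot> e = fst (germ_rep (germ S mult \<theta> s x)) \<cdot> e" using germ_mem by blast
  have "fst (germ_rep (germ S mult \<theta> s x)) \<in> S" using e(1) unfolding germ_pairs_def by auto
  then show ?thesis using th_idem_right e p pairD by metis
qed

lemma germ_r_eq: "(s, x) \<in> germ_pairs S \<theta> \<Longrightarrow> germ_r \<theta> (germ S mult \<theta> s x) = the (\<theta> s x)"
  unfolding germ_r_def using rep_th germ_d_eq unfolding germ_d_def by metis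

lemma keyK: assumes S: "s \<in> S" "s' \<in> S" "t \<in> S" "t' \<in> S" and ef: "e \<in> E" "f \<in> E"
  and sf: "s \<cdot> f = s' \<cdot> f" and te: "t \<cdot> e = t' \<cdot> e" and xe: "x \<in> dom (\<theta> e)"
  and ty: "\<theta> t x = Some y" and yf: "y \<in> dom (\<theta> f)"
  shows "\<exists>k\<in>E. x \<in> dom (\<theta> k) \<and> (s \<cdot> t) \<cdot> k = (s' \<cdot> t') \<cdot> k"
proof -
  have eS: "e \<in> S" and fS: "f \<in> S" using ef idemD by auto
  define w where "w = t \<cdot> e"
  have wS: "w \<in> S" using w_def S eS by simp
  have ivS: "iv w \<in> S" using iv_props wS by simp
  have wx: "\<theta> w x = Some y" using th_idem_right[of t e x] S ef xe ty w_def by simp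
  define k0 where "k0 = iv w \<cdot> (f \<cdot> w)"
  have k0S: "k0 \<in> S" using k0_def ivS fS wS by simp
  have wwE: "w \<cdot> iv w \<in> E"
  proof -
    have "(w \<cdot> iv w) \<cdot> (w \<cdot> iv w) = (w \<cdot> iv w \<cdot> w) \<cdot> iv w" using wS ivS by simp
    then show ?thesis using iv_props wS ivS unfolding idems_def by simp
  qed
  have comm: "f \<cdot> (w \<cdot> iv w) = (w \<cdot> iv w) \<cdot> f" using idem_comm wwE ef by simp
  have wk0: "w \<cdot> k0 = f \<cdot> w"
  proof -
    have "w \<cdot> k0 = (f \<cdot> (w \<cdot> iv w)) \<cdot> w" using comm k0_def wS ivS fS by simp
    also have "\<dots> = f \<cdot> (w \<cdot> iv w \<cdot> w)" using wS ivS fS by simp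
    finally show ?thesis using iv_props wS by simp
  qed
  have k0E: "k0 \<in> E"
  proof -
    have "k0 \<cdot> k0 = iv w \<cdot> ((f \<cdot> (w \<cdot> iv w)) \<cdot> (f \<cdot> w))" using k0_def wS ivS fS by simp
    also have "\<dots> = iv w \<cdot> ((w \<cdot> iv w) \<cdot> ((f \<cdot> f) \<cdot> w))" using comm wS ivS fS by simp
    also have "\<dots> = (iv w \<cdot> w \<cdot> iv w) \<cdot> (f \<cdot> w)" using idemD[OF ef(2)] wS ivS fS by simp
    also have "\<dots> = k0" using iv_props wS k0_def by simp
    finally show ?thesis using k0S unfolding idems_def by simp
  qed
  have fy: "\<theta> f y = Some y" using idem_fix' ef yf by simp
  have ivy: "\<theta> (iv w) y = Some x" using iv_back wS wx by simp
  have "\<theta> k0 x = Some x"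
    using th_mult_app[of "iv w" "f \<cdot> w" x] th_mult_app[of f w x] k0_def ivS fS wS wx fy ivy
    by simp
  then have k0x: "x \<in> dom (\<theta> k0)" by auto
  define k where "k = e \<cdot> k0"
  have kE: "k \<in> E" using prod_idem ef k0E k_def by simp
  have kx: "x \<in> dom (\<theta> k)" using th_mult_app[of e k0 x] eS k0S k_def \<open>\<theta> k0 x = Some x\<close> xe
    by (simp add: domIff)
  have "(s \<cdot> t) \<cdot> k = s \<cdot> (w \<cdot> k0)" using S eS k0S k_def w_def by simp
  also have "\<dots> = (s \<cdot> f) \<cdot> w" using wk0 S fS wS by simp
  also have "\<dots> = (s' \<cdot> f) \<cdot> w" using sf by simp
  also have "\<dots> = s' \<cdot> (w \<cdot> k0)" using wk0 S fS wS by simp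
  also have "\<dots> = s' \<cdot> ((t' \<cdot> e) \<cdot> k0)" using te w_def by simp
  also have "\<dots> = (s' \<cdot> t') \<cdot> k" using S eS k0S k_def by simp
  finally show ?thesis using kE kx by blast
qed

theorem main: "germ_strongly_graded S mult \<theta> deg"
  unfolding germ_strongly_graded_def
proof (intro allI equalityI subsetI)
  fix \<alpha> \<beta> g
  assume "g \<in> germ_set_mult S mult \<theta> (germ_homog S mult \<theta> deg \<alpha>) (germ_homog S mult \<theta> deg \<beta>)"
  then obtain a b where g: "g = germ_comp S mult \<theta> a b" and a: "a \<in> germs S mult \<theta>"
    "germ_deg deg a = \<alpha>" and b: "b \<in> germs S mult \<theta>" "germ_deg deg b = \<beta>"
    and db: "germ_d a = germ_r \<theta> b"
    unfolding germ_set_mult_def germ_homog_def by blast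
  obtain s x' where ra: "germ_rep a = (s, x')" by (cases "germ_rep a")
  obtain t y where rb: "germ_rep b = (t, y)" by (cases "germ_rep b")
  have pa': "(s, x') \<in> germ_pairs S \<theta>" using rep_in[OF a(1)] ra germs_sub[OF a(1)] by auto
  have pb': "(t, y) \<in> germ_pairs S \<theta>" using rep_in[OF b(1)] rb germs_sub[OF b(1)] by auto
  have sS: "s \<in> S" "x' \<in> dom (\<theta> s)" and tS: "t \<in> S" "y \<in> dom (\<theta> t)"
    using pa' pb' pairD by auto
  have "x' = the (\<theta> t y)" using db ra rb unfolding germ_d_def germ_r_def by simp
  then have ty: "\<theta> t y = Some x'" using tS by auto
  have "\<theta> (s \<cdot> t) y = \<theta> s x'" using th_mult_app sS tS ty by simp
  then have pst: "(s \<cdot> t, y) \<in> germ_pairs S \<theta>" using sS tS pairD by (simp add: domIff)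
  have gg: "g = germ S mult \<theta> (s \<cdot> t) y" using g ra rb unfolding germ_comp_def by simp
  have "germ_deg deg g = deg (s \<cdot> t)" using germ_deg_eq pst gg by simp
  also have "\<dots> = deg s + deg t"
    using deg_mult[OF sS(1) tS(1) nz[OF sS] nz[OF tS] nz[of "s \<cdot> t" y]] pst pairD by simp
  also have "\<dots> = \<alpha> + \<beta>" using a(2) b(2) ra rb unfolding germ_deg_def by simp
  finally show "g \<in> germ_homog S mult \<theta> deg (\<alpha> + \<beta>)"
    unfolding germ_homog_def using germ_in pst gg by simp
next
  fix \<alpha> \<beta> g
  assume "g \<in> germ_homog S mult \<theta> deg (\<alpha> + \<beta>)"
  then obtain u x where pu: "(u, x) \<in> germ_pairs S \<theta>" and gu: "g = germ S mult \<theta> u x"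
    and du: "germ_deg deg g = \<alpha> + \<beta>"
    unfolding germ_homog_def germs_def by blast
  have uS: "u \<in> S" "x \<in> dom (\<theta> u)" using pu pairD by auto
  have "deg u = \<alpha> + \<beta>" using germ_deg_eq pu gu du by simp
  then have "u \<in> homog S z deg (\<alpha> + \<beta>)" using uS unfolding homog_def by simp
  then have "u \<in> set_mult mult (homog S z deg \<alpha>) (homog S z deg \<beta>)"
    using sg unfolding strongly_graded_sg_def by simp
  then obtain s t where ust: "u = s \<cdot> t" "s \<in> homog S z deg \<alpha>" "t \<in> homog S z deg \<beta>"
    unfolding set_mult_def by blast
  have sS: "s \<in> S" "t \<in> S" using ust zero(1) unfolding homog_def by auto
  have "\<theta> (s \<cdot> t) x \<noteq> None" using uS ust by auto
  then obtain y where ty: "\<theta> t x = Some y" and sy: "y \<in> dom (\<theta> s)"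
    using th_mult_app[OF sS, of x] by (cases "\<theta> t x") (auto simp: domIff)
  have pa': "(s, y) \<in> germ_pairs S \<theta>" and pb': "(t, x) \<in> germ_pairs S \<theta>"
    using sS sy ty pairD by auto
  have ds: "deg s = \<alpha>" using ust(2) nz sS sy unfolding homog_def by auto
  have dt: "deg t = \<beta>" using ust(3) nz sS ty unfolding homog_def by (auto simp: domIff)
  define a where "a = germ S mult \<theta> s y"
  define b where "b = germ S mult \<theta> t x"
  have aH: "a \<in> germ_homog S mult \<theta> deg \<alpha>"
    unfolding germ_homog_def using germ_in germ_deg_eq pa' ds a_def by simp
  have bH: "b \<in> germ_homog S mult \<theta> deg \<beta>"
    unfolding germ_homog_def using germ_in germ_deg_eq pb' dt b_def by simp
  have dr: "germ_d a = germ_r \<theta> b" using germ_d_eq germ_r_eq pa' pb' ty a_def b_def by simp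
  obtain s' y' where ra: "germ_rep a = (s', y')" by (cases "germ_rep a")
  obtain t' x' where rb: "germ_rep b = (t', x')" by (cases "germ_rep b")
  have "germ_rep a \<in> a" using rep_in germ_in pa' a_def by simp
  then have "(s', y') \<in> germ S mult \<theta> s y" using ra a_def by simp
  then have "(s', y') \<in> germ_pairs S \<theta> \<and> y' = y \<and> (\<exists>e\<in>E. y \<in> dom (\<theta> e) \<and> s \<cdot> e = s' \<cdot> e)"
    unfolding germ_mem fst_conv snd_conv .
  then have f0: "(s', y') \<in> germ_pairs S \<theta>" "y' = y" "\<exists>e\<in>E. y \<in> dom (\<theta> e) \<and> s \<cdot> e = s' \<cdot> e"
    by blast+
  from f0(3) obtain f where f: "f \<in> E" "y \<in> dom (\<theta> f)" "s \<cdot> f = s' \<cdot> f" by blast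
  have "germ_rep b \<in> b" using rep_in germ_in pb' b_def by simp
  then have "(t', x') \<in> germ S mult \<theta> t x" using rb b_def by simp
  then have "(t', x') \<in> germ_pairs S \<theta> \<and> x' = x \<and> (\<exists>e\<in>E. x \<in> dom (\<theta> e) \<and> t \<cdot> e = t' \<cdot> e)"
    unfolding germ_mem fst_conv snd_conv .
  then have e0: "(t', x') \<in> germ_pairs S \<theta>" "x' = x" "\<exists>e\<in>E. x \<in> dom (\<theta> e) \<and> t \<cdot> e = t' \<cdot> e"
    by blast+
  from e0(3) obtain e where e: "e \<in> E" "x \<in> dom (\<theta> e)" "t \<cdot> e = t' \<cdot> e" by blast
  have s'S: "s' \<in> S" "y \<in> dom (\<theta> s')" using f0 pairD by auto
  have t'S: "t' \<in> S" using e0 pairD by auto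
  have "\<theta> t' x = \<theta> t x" using rep_th[OF pb'] rb b_def e0(2) by simp
  then have "\<theta> (s' \<cdot> t') x = \<theta> s' y" using th_mult_app s'S t'S ty by simp
  then have pst': "(s' \<cdot> t', x) \<in> germ_pairs S \<theta>" using s'S t'S pairD by (simp add: domIff)
  obtain k where k: "k \<in> E" "x \<in> dom (\<theta> k)" "(s \<cdot> t) \<cdot> k = (s' \<cdot> t') \<cdot> k"
    using keyK[OF sS(1) s'S(1) sS(2) t'S e(1) f(1) f(3) e(3) e(2) ty f(2)] by blast
  have "germ_comp S mult \<theta> a b = germ S mult \<theta> (s' \<cdot> t') x"
    unfolding germ_comp_def using ra rb e0(2) by simp
  also have "\<dots> = g" using germ_eq[OF pst' _ k(1,2) k(3)[symmetric]] pu gu ust by simp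
  finally show "g \<in> germ_set_mult S mult \<theta> (germ_homog S mult \<theta> deg \<alpha>) (germ_homog S mult \<theta> deg \<beta>)"
    unfolding germ_set_mult_def using aH bH dr by blast
qed

end

theorem proposition6p1:
  fixes S :: "'s set" and mult :: "'s \<Rightarrow> 's \<Rightarrow> 's" and z :: 's
    and deg :: "'s \<Rightarrow> 'g::group_add"
    and X :: "'x set" and \<theta> :: "'s \<Rightarrow> 'x \<rightharpoonup> 'x"
  assumes "inverse_semigroup0 S mult z"
    and "graded S mult z deg"
    and "partial_action S mult z X \<theta>"
    and "non_degenerate S mult X \<theta>"
    and "X \<noteq> {}"
    and "strongly_graded_sg S mult z deg"
  shows "germ_strongly_graded S mult \<theta> deg"
proof -
  interpret L S mult z deg X \<theta> using assms by (unfold_locales) auto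
  show ?thesis by (rule main)
qed

end
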